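(* Let $R$ be a Dedekind domain and $I$ a non-principal ideal of $R$ such that $I\cong I^{-1}$ as $R$-modules. Let $A=M_2(R)$. Then ${}_A\mathrm{Hom}_R(A,I)\cong{}_AA$ as left $A$-modules.
   Context: The left $A$-module structure on $\mathrm{Hom}_R(A,I)$ is $(af)(x)=f(xa)$. *)

theory Defs
  imports "HOL-Analysis.Analysis" "HOL-Computational_Algebra.Polynomial"
    "HOL-Computational_Algebra.Fraction_Field"
begin

definition is_ideal :: "'a::comm_ring_1 set \<Rightarrow> bool" where
  "is_ideal I \<longleftrightarrow> 0 \<in> I \<and> (\<forall>x\<in>I. \<forall>y\<in>I. x + y \<in> I) \<and> (\<forall>r. \<forall>x\<in>I. r * x \<in> I)"

definition principal_ideal :: "'a::comm_ring_1 set \<Rightarrow> bool" where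
  "principal_ideal I \<longleftrightarrow> (\<exists>a. I = {a * r | r. True})"

definition finitely_generated_ideal :: "'a::comm_ring_1 set \<Rightarrow> bool" where
  "finitely_generated_ideal I \<longleftrightarrow>
     (\<exists>F. finite F \<and> I = {x. \<exists>c. x = (\<Sum>a\<in>F. c a * a)})"

definition is_prime_ideal :: "'a::comm_ring_1 set \<Rightarrow> bool" where
  "is_prime_ideal P \<longleftrightarrow> is_ideal P \<and> P \<noteq> UNIV \<and> (\<forall>a b. a * b \<in> P \<longrightarrow> a \<in> P \<or> b \<in> P)"

definition is_maximal_ideal :: "'a::comm_ring_1 set \<Rightarrow> bool" where
  "is_maximal_ideal M \<longleftrightarrow> is_ideal M \<and> M \<noteq> UNIV \<and>
     (\<forall>J. is_ideal J \<and> M \<subseteq> J \<longrightarrow> J = M \<or> J = UNIV)"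

definition frac_emb :: "'a::idom \<Rightarrow> 'a fract" where
  "frac_emb r = Fract r 1"

definition noetherian_ring_cls :: "'a::comm_ring_1 itself \<Rightarrow> bool" where
  "noetherian_ring_cls _ \<longleftrightarrow> (\<forall>I::'a set. is_ideal I \<longrightarrow> finitely_generated_ideal I)"

definition integrally_closed :: "'a::idom itself \<Rightarrow> bool" where
  "integrally_closed _ \<longleftrightarrow>
     (\<forall>x::'a fract. (\<exists>p::'a poly. lead_coeff p = 1 \<and> poly (map_poly frac_emb p) x = 0)
        \<longrightarrow> x \<in> range frac_emb)"

definition dedekind_domain :: "'a::idom itself \<Rightarrow> bool" where
  "dedekind_domain T \<longleftrightarrow> noetherian_ring_cls T \<and> integrally_closed T \<and>
     (\<forall>P::'a set. is_prime_ideal P \<and> P \<noteq> {0} \<longrightarrow> is_maximal_ideal P)"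

definition ideal_inverse :: "'a::idom set \<Rightarrow> 'a fract set" where
  "ideal_inverse I = {x. \<forall>i\<in>I. x * frac_emb i \<in> range frac_emb}"

definition ideal_iso_frac :: "'a::idom set \<Rightarrow> 'a fract set \<Rightarrow> bool" where
  "ideal_iso_frac I J \<longleftrightarrow> (\<exists>\<phi> :: 'a \<Rightarrow> 'a fract. bij_betw \<phi> I J \<and>
      (\<forall>x\<in>I. \<forall>y\<in>I. \<phi> (x + y) = \<phi> x + \<phi> y) \<and>
      (\<forall>r. \<forall>x\<in>I. \<phi> (r * x) = frac_emb r * \<phi> x))"

definition mscale :: "'a::comm_ring_1 \<Rightarrow> 'a^2^2 \<Rightarrow> 'a^2^2" where
  "mscale r X = (\<chi> i j. r * X$i$j)"

definition hom_R_A :: "'a::comm_ring_1 set \<Rightarrow> ('a^2^2 \<Rightarrow> 'a) set" where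
  "hom_R_A I = {f. (\<forall>x y. f (x + y) = f x + f y) \<and> (\<forall>r x. f (mscale r x) = r * f x)
                   \<and> (\<forall>x. f x \<in> I)}"

definition hom_act :: "'a::comm_ring_1^2^2 \<Rightarrow> ('a^2^2 \<Rightarrow> 'a) \<Rightarrow> ('a^2^2 \<Rightarrow> 'a)" where
  "hom_act a f = (\<lambda>x. f (x ** a))"

definition hom_iso_regular :: "'a::comm_ring_1 set \<Rightarrow> bool" where
  "hom_iso_regular I \<longleftrightarrow> (\<exists>\<Phi> :: ('a^2^2 \<Rightarrow> 'a) \<Rightarrow> 'a^2^2.
      bij_betw \<Phi> (hom_R_A I) UNIV \<and>
      (\<forall>f\<in>hom_R_A I. \<forall>g\<in>hom_R_A I. \<Phi> (\<lambda>x. f x + g x) = \<Phi> f + \<Phi> g) \<and>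
      (\<forall>a. \<forall>f\<in>hom_R_A I. \<Phi> (hom_act a f) = a ** \<Phi> f))"

end

theory Submission
  imports Defs
begin


lemma emb_add[simp]: "frac_emb (a + b) = frac_emb a + frac_emb b"
  by (simp add: frac_emb_def)
lemma emb_mult[simp]: "frac_emb (a * b) = frac_emb a * frac_emb b"
  by (simp add: frac_emb_def)
lemma emb_0[simp]: "frac_emb 0 = 0"
  by (simp add: frac_emb_def Zero_fract_def)
lemma emb_1[simp]: "frac_emb 1 = 1"
  by (simp add: frac_emb_def One_fract_def)
lemma emb_minus[simp]: "frac_emb (- a) = - frac_emb a"
  by (simp add: frac_emb_def)
lemma emb_diff[simp]: "frac_emb (a - b) = frac_emb a - frac_emb b"
  by (simp add: frac_emb_def)
lemma emb_inj[simp]: "frac_emb a = frac_emb b \<longleftrightarrow> a = b"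
  by (simp add: frac_emb_def eq_fract)
lemma emb_eq0[simp]: "frac_emb a = 0 \<longleftrightarrow> a = 0"
  using emb_inj[of a 0] by simp
lemma emb_sum: "frac_emb (sum f A) = (\<Sum>x\<in>A. frac_emb (f x))"
  by (induction A rule: infinite_finite_induct) auto
lemma emb_prod: "frac_emb (prod f A) = (\<Prod>x\<in>A. frac_emb (f x))"
  by (induction A rule: infinite_finite_induct) auto
lemma emb_power[simp]: "frac_emb (a ^ n) = frac_emb a ^ n"
  by (induction n) auto

definition PE :: "'a::idom poly \<Rightarrow> 'a fract \<Rightarrow> 'a fract" where
  "PE p z = poly (map_poly frac_emb p) z"

lemma map_emb_add: "map_poly frac_emb (p + q) = map_poly frac_emb p + map_poly frac_emb q"
  by (intro poly_eqI) (simp add: coeff_map_poly)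
lemma map_emb_diff: "map_poly frac_emb (p - q) = map_poly frac_emb p - map_poly frac_emb q"
  by (intro poly_eqI) (simp add: coeff_map_poly)
lemma PE_add: "PE (p + q) z = PE p z + PE q z"
  by (simp add: PE_def map_emb_add)
lemma PE_diff: "PE (p - q) z = PE p z - PE q z"
  by (simp add: PE_def map_emb_diff)
lemma PE_smult: "PE (smult r p) z = frac_emb r * PE p z"
  by (simp add: PE_def map_poly_smult)
lemma PE_monom: "PE (monom r n) z = frac_emb r * z ^ n"
  by (simp add: PE_def map_poly_monom poly_monom)
lemma PE_0[simp]: "PE 0 z = 0"
  by (simp add: PE_def)
lemma PE_sum: "PE (sum f A) z = (\<Sum>x\<in>A. PE (f x) z)"
  by (induction A rule: infinite_finite_induct) (auto simp: PE_add)

lemma ideal_0: "is_ideal I \<Longrightarrow> 0 \<in> I" by (simp add: is_ideal_def)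
lemma ideal_add: "is_ideal I \<Longrightarrow> x \<in> I \<Longrightarrow> y \<in> I \<Longrightarrow> x + y \<in> I" by (simp add: is_ideal_def)
lemma ideal_multL: "is_ideal I \<Longrightarrow> x \<in> I \<Longrightarrow> r * x \<in> I" by (simp add: is_ideal_def)
lemma ideal_multR: "is_ideal I \<Longrightarrow> x \<in> I \<Longrightarrow> x * r \<in> I"
  using ideal_multL[of I x r] by (simp add: mult.commute)
lemma ideal_neg: "is_ideal I \<Longrightarrow> x \<in> I \<Longrightarrow> - x \<in> I"
  using ideal_multL[of I x "-1"] by simp
lemma ideal_diff: "is_ideal I \<Longrightarrow> x \<in> I \<Longrightarrow> y \<in> I \<Longrightarrow> x - y \<in> I"
  using ideal_add[of I x "-y"] ideal_neg[of I y] by simp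
lemma ideal_sum: "is_ideal I \<Longrightarrow> (\<And>a. a \<in> A \<Longrightarrow> f a \<in> I) \<Longrightarrow> sum f A \<in> I"
  by (induction A rule: infinite_finite_induct) (auto simp: ideal_0 ideal_add)
lemma ideal_one: "is_ideal I \<Longrightarrow> 1 \<in> I \<Longrightarrow> I = UNIV"
  using ideal_multL[of I 1] by auto
lemma ideal_UNIV: "is_ideal (UNIV::'a::comm_ring_1 set)"
  by (simp add: is_ideal_def)

definition ideal_gt :: "('a::comm_ring_1 set \<times> 'a set) set" where
  "ideal_gt = {(J', J). is_ideal J \<and> is_ideal J' \<and> J \<subset> J'}"

lemma wf_ideal_gt:
  assumes "noetherian_ring_cls TYPE('a::comm_ring_1)"
  shows "wf (ideal_gt :: ('a set \<times> 'a set) set)"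
proof (subst wf_iff_no_infinite_down_chain, rule notI)
  assume "\<exists>f. \<forall>i. (f (Suc i), f i) \<in> (ideal_gt :: ('a set \<times> 'a set) set)"
  then obtain f :: "nat \<Rightarrow> 'a set" where f: "\<And>i. (f (Suc i), f i) \<in> ideal_gt" by blast
  have id: "is_ideal (f i)" for i using f[of i] by (auto simp: ideal_gt_def)
  have lt: "f i \<subset> f (Suc i)" for i using f[of i] by (auto simp: ideal_gt_def)
  have mono: "i \<le> j \<Longrightarrow> f i \<subseteq> f j" for i j
    by (rule lift_Suc_mono_le[of f]) (use lt in auto)
  define U where "U = \<Union>(range f)"
  have "is_ideal U"
    unfolding is_ideal_def
  proof (intro conjI ballI allI)
    show "0 \<in> U" using ideal_0[OF id[of 0]] by (auto simp: U_def)
  next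
    fix x y assume "x \<in> U" "y \<in> U"
    then obtain i j where "x \<in> f i" "y \<in> f j" by (auto simp: U_def)
    then have "x \<in> f (max i j)" "y \<in> f (max i j)" using mono[of i "max i j"] mono[of j "max i j"] by auto
    then show "x + y \<in> U" using ideal_add[OF id] by (auto simp: U_def)
  next
    fix r x assume "x \<in> U"
    then show "r * x \<in> U" using ideal_multL[OF id] by (auto simp: U_def)
  qed
  then obtain F where F: "finite F" "U = {x. \<exists>c. x = (\<Sum>a\<in>F. c a * a)}"
    using assms unfolding noetherian_ring_cls_def finitely_generated_ideal_def by blast
  have FU: "a \<in> U" if "a \<in> F" for a
  proof -
    have "(\<Sum>b\<in>F. (if b = a then 1 else 0) * b) = (\<Sum>b\<in>F. if b = a then b else 0)"
      by (intro sum.cong) auto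
    also have "\<dots> = a" using that F(1) by simp
    finally have "(\<Sum>b\<in>F. (if b = a then 1 else 0) * b) = a" .
    then have "\<exists>c. a = (\<Sum>b\<in>F. c b * b)" by (intro exI[of _ "\<lambda>b. if b = a then 1 else 0"]) simp
    then show ?thesis unfolding F(2) by simp
  qed
  have "\<forall>a\<in>F. \<exists>n. a \<in> f n" using FU by (auto simp: U_def)
  then obtain n where n: "\<forall>a\<in>F. a \<in> f (n a)" by (rule bchoice[THEN exE])
  define N where "N = Max (n ` F)"
  have "a \<in> f N" if "a \<in> F" for a
    using n that mono[of "n a" N] that F(1) by (auto simp: N_def)
  then have "U \<subseteq> f N"
    unfolding F(2) by (auto intro!: ideal_sum[OF id[of N]] ideal_multL[OF id[of N]])
  moreover have "f (Suc N) \<subseteq> U" by (auto simp: U_def)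
  ultimately show False using lt[of N] by auto
qed



definition prodin :: "'a::comm_ring_1 set \<Rightarrow> 'a set list \<Rightarrow> bool" where
  "prodin J Ps \<longleftrightarrow> (\<forall>xs. list_all2 (\<lambda>x P. x \<in> P) xs Ps \<longrightarrow> prod_list xs \<in> J)"

definition nzprime :: "'a::comm_ring_1 set \<Rightarrow> bool" where
  "nzprime P \<longleftrightarrow> is_prime_ideal P \<and> P \<noteq> {0}"

lemma maximal_prime:
  assumes "is_maximal_ideal M" shows "is_prime_ideal M"
  unfolding is_prime_ideal_def
proof (intro conjI allI impI)
  have M: "is_ideal M" "M \<noteq> UNIV" using assms by (auto simp: is_maximal_ideal_def)
  then show "is_ideal M" "M \<noteq> UNIV" by auto
  fix a b assume ab: "a * b \<in> M"
  show "a \<in> M \<or> b \<in> M"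
  proof (cases "a \<in> M")
    case True then show ?thesis by simp
  next
    case False
    define J where "J = {m + a * r | m r. m \<in> M}"
    have "is_ideal J" unfolding is_ideal_def J_def
    proof (intro conjI ballI allI)
      show "0 \<in> {m + a * r |m r. m \<in> M}" using ideal_0[OF M(1)] by (intro CollectI exI[of _ 0]) auto
    next
      fix x y assume "x \<in> {m + a * r |m r. m \<in> M}" "y \<in> {m + a * r |m r. m \<in> M}"
      then obtain m1 r1 m2 r2 where "x = m1 + a * r1" "y = m2 + a * r2" "m1 \<in> M" "m2 \<in> M" by auto
      then show "x + y \<in> {m + a * r |m r. m \<in> M}"
        by (intro CollectI exI[of _ "m1 + m2"] exI[of _ "r1 + r2"]) (auto simp: algebra_simps ideal_add[OF M(1)])
    next
      fix s x assume "x \<in> {m + a * r |m r. m \<in> M}"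
      then obtain m1 r1 where "x = m1 + a * r1" "m1 \<in> M" by auto
      then show "s * x \<in> {m + a * r |m r. m \<in> M}"
      proof -
        have "s * x = s * m1 + a * (s * r1)" "s * m1 \<in> M" using \<open>x = m1 + a * r1\<close> \<open>m1 \<in> M\<close> ideal_multL[OF M(1)] by (auto simp: algebra_simps)
        then show ?thesis by blast
      qed
    qed
    moreover have "M \<subseteq> J" unfolding J_def proof
      fix x assume "x \<in> M" then have "x = x + a * 0 \<and> x \<in> M" by simp
      then show "x \<in> {m + a * r |m r. m \<in> M}" by blast
    qed
    moreover have "a \<in> J" unfolding J_def using ideal_0[OF M(1)] by (intro CollectI exI[of _ 0] exI[of _ 1]) auto
    ultimately have "J = UNIV" using assms False unfolding is_maximal_ideal_def by blast
    then obtain m r where "1 = m + a * r" "m \<in> M" unfolding J_def by blast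
    then have "b = b * (m + a * r)" by simp
    then have "b = b * m + (a * b) * r" by (simp add: algebra_simps)
    also have "\<dots> \<in> M" using ideal_multL[OF M(1) \<open>m \<in> M\<close>] ideal_multR[OF M(1) ab] ideal_add[OF M(1)] by metis
    finally show ?thesis by simp
  qed
qed

lemma prodin_Nil: "prodin J [] \<longleftrightarrow> 1 \<in> J"
  by (simp add: prodin_def)

lemma prime_prodin:
  assumes "is_prime_ideal P" "prodin P Ps" shows "\<exists>Q\<in>set Ps. Q \<subseteq> P"
  using assms(2)
proof (induction Ps)
  case Nil
  then have "1 \<in> P" by (simp add: prodin_Nil)
  then show ?case using assms(1) ideal_one unfolding is_prime_ideal_def by blast
next
  case (Cons Q Ps)
  show ?case
  proof (cases "Q \<subseteq> P")
    case True then show ?thesis by auto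
  next
    case False
    then obtain q where q: "q \<in> Q" "q \<notin> P" by auto
    have "prodin P Ps" unfolding prodin_def
    proof (intro allI impI)
      fix xs assume "list_all2 (\<lambda>x P. x \<in> P) xs Ps"
      then have "list_all2 (\<lambda>x P. x \<in> P) (q # xs) (Q # Ps)" using q by simp
      then have "q * prod_list xs \<in> P" using Cons.prems unfolding prodin_def by fastforce
      then show "prod_list xs \<in> P" using q(2) assms(1) unfolding is_prime_ideal_def by blast
    qed
    then show ?thesis using Cons.IH by auto
  qed
qed

lemma exists_maximal:
  assumes "noetherian_ring_cls TYPE('a::comm_ring_1)"
  shows "is_ideal (J::'a set) \<Longrightarrow> J \<noteq> UNIV \<Longrightarrow> \<exists>M. is_maximal_ideal M \<and> J \<subseteq> M"
proof (induction J rule: wf_induct[OF wf_ideal_gt[OF assms]])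
  case (1 J)
  show ?case
  proof (cases "is_maximal_ideal J")
    case True then show ?thesis by blast
  next
    case False
    then obtain J' where "is_ideal J'" "J \<subseteq> J'" "J' \<noteq> J" "J' \<noteq> UNIV"
      using 1 unfolding is_maximal_ideal_def by blast
    then have "(J', J) \<in> ideal_gt" using 1 by (auto simp: ideal_gt_def)
    with 1 \<open>is_ideal J'\<close> \<open>J' \<noteq> UNIV\<close> obtain M where "is_maximal_ideal M" "J' \<subseteq> M" by blast
    then show ?thesis using \<open>J \<subseteq> J'\<close> by blast
  qed
qed

lemma contains_prime_product:
  assumes "noetherian_ring_cls TYPE('a::comm_ring_1)"
  shows "is_ideal (J::'a set) \<Longrightarrow> J \<noteq> {0} \<Longrightarrow> \<exists>Ps. (\<forall>P\<in>set Ps. nzprime P) \<and> prodin J Ps"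
proof (induction J rule: wf_induct[OF wf_ideal_gt[OF assms]])
  case (1 J)
  show ?case
  proof (cases "J = UNIV \<or> is_prime_ideal J")
    case True
    then show ?thesis
    proof
      assume "J = UNIV" then show ?thesis by (intro exI[of _ "[]"]) (simp add: prodin_Nil)
    next
      assume "is_prime_ideal J"
      then show ?thesis using 1 by (intro exI[of _ "[J]"]) (auto simp: prodin_def nzprime_def list_all2_Cons2)
    qed
  next
    case False
    then obtain a b where ab: "a * b \<in> J" "a \<notin> J" "b \<notin> J"
      using 1 unfolding is_prime_ideal_def by blast
    have ext: "is_ideal {j + c * r | j r. j \<in> J} \<and> J \<subset> {j + c * r | j r. j \<in> J} \<and> {j + c * r | j r. j \<in> J} \<noteq> {0}"
      if "c \<notin> J" for c
    proof -
      have I: "is_ideal J" by (rule 1)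
      have "is_ideal {j + c * r | j r. j \<in> J}" unfolding is_ideal_def
      proof (intro conjI ballI allI)
        show "0 \<in> {j + c * r |j r. j \<in> J}" using ideal_0[OF I] by (intro CollectI exI[of _ 0]) auto
      next
        fix x y assume "x \<in> {j + c * r |j r. j \<in> J}" "y \<in> {j + c * r |j r. j \<in> J}"
        then obtain m1 r1 m2 r2 where "x = m1 + c * r1" "y = m2 + c * r2" "m1 \<in> J" "m2 \<in> J" by auto
        then show "x + y \<in> {j + c * r |j r. j \<in> J}"
          by (intro CollectI exI[of _ "m1 + m2"] exI[of _ "r1 + r2"]) (auto simp: algebra_simps ideal_add[OF I])
      next
        fix s x assume "x \<in> {j + c * r |j r. j \<in> J}"
        then obtain m1 r1 where "x = m1 + c * r1" "m1 \<in> J" by auto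
        then show "s * x \<in> {j + c * r |j r. j \<in> J}"
        proof -
        have "s * x = s * m1 + c * (s * r1)" "s * m1 \<in> J" using \<open>x = m1 + c * r1\<close> \<open>m1 \<in> J\<close> ideal_multL[OF I] by (auto simp: algebra_simps)
        then show ?thesis by blast
      qed
      qed
      moreover have "J \<subseteq> {j + c * r | j r. j \<in> J}" proof
        fix x assume "x \<in> J" then have "x = x + c * 0 \<and> x \<in> J" by simp
        then show "x \<in> {j + c * r |j r. j \<in> J}" by blast
      qed
      moreover have "c \<in> {j + c * r | j r. j \<in> J}" using ideal_0[OF I] by (intro CollectI exI[of _ 0] exI[of _ 1]) auto
      ultimately show ?thesis using that 1(3) by auto
    qed
    have "(\<exists>Ps. (\<forall>P\<in>set Ps. nzprime P) \<and> prodin {j + c * r | j r. j \<in> J} Ps)" if "c \<notin> J" for c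
      using 1(1) ext[OF that] by (auto simp: ideal_gt_def 1(2))
    from this[OF ab(2)] this[OF ab(3)] obtain Ps Qs where
      Ps: "\<forall>P\<in>set Ps. nzprime P" "prodin {j + a * r | j r. j \<in> J} Ps" and
      Qs: "\<forall>P\<in>set Qs. nzprime P" "prodin {j + b * r | j r. j \<in> J} Qs" by blast
    have "prodin J (Ps @ Qs)" unfolding prodin_def
    proof (intro allI impI)
      fix xs assume "list_all2 (\<lambda>x P. x \<in> P) xs (Ps @ Qs)"
      then obtain us vs where uv: "xs = us @ vs" "list_all2 (\<lambda>x P. x \<in> P) us Ps" "list_all2 (\<lambda>x P. x \<in> P) vs Qs"
        by (auto simp: list_all2_append2)
      obtain j1 r1 where 1: "prod_list us = j1 + a * r1" "j1 \<in> J" using Ps(2) uv(2) unfolding prodin_def by blast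
      obtain j2 r2 where 2: "prod_list vs = j2 + b * r2" "j2 \<in> J" using Qs(2) uv(3) unfolding prodin_def by blast
      have I: "is_ideal J" by (rule "1.prems"(1))
      have "prod_list xs = j1 * (j2 + b * r2) + j2 * (a * r1) + (a * b) * (r1 * r2)"
        using uv(1) 1 2 by (simp add: algebra_simps)
      also have "\<dots> \<in> J"
        using ideal_multR[OF I 1(2)] ideal_multR[OF I 2(2)] ideal_multR[OF I ab(1)] ideal_add[OF I] by metis
      finally show "prod_list xs \<in> J" .
    qed
    then show ?thesis using Ps Qs by (intro exI[of _ "Ps @ Qs"]) auto
  qed
qed



lemma prodin_mono: "prodin J Ps \<Longrightarrow> J \<subseteq> J' \<Longrightarrow> prodin J' Ps"
  unfolding prodin_def by blast

lemma principal_is_ideal: "is_ideal {a * r | r. True}"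
  unfolding is_ideal_def
proof (intro conjI ballI allI)
  show "0 \<in> {a * r |r. True}" by (intro CollectI exI[of _ 0]) simp
next
  fix x y assume "x \<in> {a * r |r. True}" "y \<in> {a * r |r. True}"
  then obtain r1 r2 where "x = a * r1" "y = a * r2" by auto
  then have "x + y = a * (r1 + r2)" by (simp add: algebra_simps)
  then show "x + y \<in> {a * r |r. True}" by blast
next
  fix s x assume "x \<in> {a * r |r. True}"
  then obtain r1 where "x = a * r1" by auto
  then have "s * x = a * (s * r1)" by (simp add: algebra_simps)
  then show "s * x \<in> {a * r |r. True}" by blast
qed

lemma key_inverse:
  fixes J :: "'a::idom set"
  assumes ded: "dedekind_domain TYPE('a)" and J: "is_ideal J" "J \<noteq> {0}" "J \<noteq> UNIV"
  shows "\<exists>z. z \<notin> range frac_emb \<and> (\<forall>j\<in>J. z * frac_emb j \<in> range frac_emb)"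
proof -
  have noeth: "noetherian_ring_cls TYPE('a)" and maxc: "\<And>P::'a set. is_prime_ideal P \<Longrightarrow> P \<noteq> {0} \<Longrightarrow> is_maximal_ideal P"
    using ded by (auto simp: dedekind_domain_def)
  obtain a where a: "a \<in> J" "a \<noteq> 0" using J ideal_0 by blast
  define aR where "aR = {a * r | r. True}"
  have aRi: "is_ideal aR" unfolding aR_def by (rule principal_is_ideal)
  have "a \<in> aR" unfolding aR_def by (intro CollectI exI[of _ 1]) simp
  then have aR0: "aR \<noteq> {0}" using a by auto
  have aRJ: "aR \<subseteq> J" unfolding aR_def using a(1) ideal_multR[OF J(1)] by auto
  obtain M where M: "is_maximal_ideal M" "J \<subseteq> M" using exists_maximal[OF noeth J(1) J(3)] by blast
  have Mp: "is_prime_ideal M" by (rule maximal_prime[OF M(1)])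
  define good where "good n \<longleftrightarrow> (\<exists>Ps. length Ps = n \<and> (\<forall>P\<in>set Ps. nzprime P) \<and> prodin aR Ps)" for n
  have "\<exists>n. good n" using contains_prime_product[OF noeth aRi aR0] unfolding good_def by blast
  then obtain n where n: "good n" "\<And>m. m < n \<Longrightarrow> \<not> good m" by (metis exists_least_iff)
  then obtain Ps where Ps: "length Ps = n" "\<forall>P\<in>set Ps. nzprime P" "prodin aR Ps" unfolding good_def by blast
  have "prodin M Ps" using prodin_mono[OF Ps(3)] aRJ M(2) by blast
  then obtain Q where Q: "Q \<in> set Ps" "Q \<subseteq> M" using prime_prodin[OF Mp] by blast
  have "is_maximal_ideal Q" using Ps(2) Q(1) maxc by (auto simp: nzprime_def)
  then have QM: "Q = M" using Q(2) M(1) unfolding is_maximal_ideal_def by blast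
  obtain Ps1 Ps2 where split: "Ps = Ps1 @ Q # Ps2" using Q(1) by (meson split_list)
  have "\<not> good (length (Ps1 @ Ps2))" using n(2) Ps(1) split by simp
  moreover have "\<forall>P\<in>set (Ps1 @ Ps2). nzprime P" using Ps(2) split by auto
  ultimately have "\<not> prodin aR (Ps1 @ Ps2)" unfolding good_def by blast
  then obtain xs where xs: "list_all2 (\<lambda>x P. x \<in> P) xs (Ps1 @ Ps2)" "prod_list xs \<notin> aR"
    unfolding prodin_def by blast
  then obtain us vs where uv: "xs = us @ vs" "list_all2 (\<lambda>x P. x \<in> P) us Ps1" "list_all2 (\<lambda>x P. x \<in> P) vs Ps2"
    by (auto simp: list_all2_append2)
  define b where "b = prod_list xs"
  define z where "z = frac_emb b / frac_emb a"
  have "z \<notin> range frac_emb"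
  proof
    assume "z \<in> range frac_emb"
    then obtain r where "z = frac_emb r" by auto
    then have "frac_emb b = frac_emb a * frac_emb r" using a(2) by (simp add: z_def field_simps)
    then have "b = a * r" by (metis emb_inj emb_mult)
    then show False using xs(2) unfolding b_def aR_def by blast
  qed
  moreover have "z * frac_emb j \<in> range frac_emb" if "j \<in> J" for j
  proof -
    have "j \<in> Q" using that M(2) QM by blast
    then have "list_all2 (\<lambda>x P. x \<in> P) (us @ j # vs) Ps" using uv split by (simp add: list_all2_appendI)
    then have "prod_list (us @ j # vs) \<in> aR" using Ps(3) unfolding prodin_def by blast
    moreover have "prod_list (us @ j # vs) = j * b" using uv(1) by (simp add: b_def algebra_simps)
    ultimately have "j * b \<in> aR" by metis
    then obtain r where r: "j * b = a * r" unfolding aR_def by auto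
    have "z * frac_emb j = frac_emb (j * b) / frac_emb a" by (simp add: z_def)
    also have "\<dots> = frac_emb r" using r a(2) by simp
    finally show ?thesis by simp
  qed
  ultimately show ?thesis by blast
qed

lemma fg_gen_in: "I = {x. \<exists>c. x = (\<Sum>a\<in>F. c a * a)} \<Longrightarrow> finite F \<Longrightarrow> a \<in> F \<Longrightarrow> (a::'a::comm_ring_1) \<in> I"
proof -
  assume F: "I = {x. \<exists>c. x = (\<Sum>a\<in>F. c a * a)}" "finite F" and a: "a \<in> F"
  have "(\<Sum>b\<in>F. (if b = a then 1 else 0) * b) = (\<Sum>b\<in>F. if b = a then b else 0)"
    by (intro sum.cong) auto
  also have "\<dots> = a" using a F(2) by simp
  finally have "(\<Sum>b\<in>F. (if b = a then 1 else 0) * b) = a" .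
  then have "\<exists>c. a = (\<Sum>b\<in>F. c b * b)" by (intro exI[of _ "\<lambda>b. if b = a then 1 else 0"]) simp
  then show ?thesis unfolding F(1) by simp
qed

lemma integral_crit:
  fixes z w :: "'a::idom fract"
  assumes ded: "dedekind_domain TYPE('a)" and w: "w \<noteq> 0" and pw: "\<And>k. w * z ^ k \<in> range frac_emb"
  shows "z \<in> range frac_emb"
proof -
  have noeth: "noetherian_ring_cls TYPE('a)" and ic: "integrally_closed TYPE('a)"
    using ded by (auto simp: dedekind_domain_def)
  define N where "N = {r::'a. \<exists>p. frac_emb r = w * PE p z}"
  have "is_ideal N" unfolding is_ideal_def N_def
  proof (intro conjI ballI allI)
    show "0 \<in> {r. \<exists>p. frac_emb r = w * PE p z}" by (intro CollectI exI[of _ 0]) simp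
  next
    fix x y assume "x \<in> {r. \<exists>p. frac_emb r = w * PE p z}" "y \<in> {r. \<exists>p. frac_emb r = w * PE p z}"
    then obtain p q where "frac_emb x = w * PE p z" "frac_emb y = w * PE q z" by auto
    then have "frac_emb (x + y) = w * PE (p + q) z" by (simp add: PE_add algebra_simps)
    then show "x + y \<in> {r. \<exists>p. frac_emb r = w * PE p z}" by blast
  next
    fix s x assume "x \<in> {r. \<exists>p. frac_emb r = w * PE p z}"
    then obtain p where "frac_emb x = w * PE p z" by auto
    then have "frac_emb (s * x) = w * PE (smult s p) z" by (simp add: PE_smult algebra_simps)
    then show "s * x \<in> {r. \<exists>p. frac_emb r = w * PE p z}" by blast
  qed
  then obtain F where F: "finite F" "N = {x. \<exists>c. x = (\<Sum>a\<in>F. c a * a)}"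
    using noeth unfolding noetherian_ring_cls_def finitely_generated_ideal_def by blast
  have "\<forall>a\<in>F. \<exists>p. frac_emb a = w * PE p z" using fg_gen_in[OF F(2) F(1)] unfolding N_def by blast
  then obtain p where p: "\<forall>a\<in>F. frac_emb a = w * PE (p a) z" by (rule bchoice[THEN exE])
  define n where "n = Suc (Max (insert 0 ((\<lambda>a. degree (p a)) ` F)))"
  have degp: "degree (p a) < n" if "a \<in> F" for a
    using that F(1) unfolding n_def by (simp add: le_imp_less_Suc)
  obtain r0 where r0: "w * z ^ n = frac_emb r0" using pw[of n] by auto
  have "r0 \<in> N" unfolding N_def using r0 by (intro CollectI exI[of _ "monom 1 n"]) (simp add: PE_monom)
  then obtain c where c: "r0 = (\<Sum>a\<in>F. c a * a)" using F(2) by auto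
  define S where "S = (\<Sum>a\<in>F. smult (c a) (p a))"
  have "frac_emb r0 = (\<Sum>a\<in>F. frac_emb (c a) * frac_emb a)" by (simp add: c emb_sum)
  also have "\<dots> = (\<Sum>a\<in>F. w * (frac_emb (c a) * PE (p a) z))"
    using p by (intro sum.cong) (auto simp: algebra_simps)
  also have "\<dots> = w * PE S z" by (simp add: S_def PE_sum PE_smult sum_distrib_left)
  finally have wS: "w * z ^ n = w * PE S z" using r0 by simp
  define q where "q = monom 1 n - S"
  have degS: "degree S < n"
  proof -
    have "degree S \<le> n - 1" unfolding S_def
      by (rule degree_sum_le[OF F(1)]) (use degp degree_smult_le in \<open>fastforce\<close>)
    then show ?thesis unfolding n_def by simp
  qed
  have cq: "coeff q n = 1" using degS by (simp add: q_def coeff_eq_0)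
  have "degree q \<le> n" unfolding q_def using degS by (intro degree_diff_le degree_monom_le) simp
  moreover have "n \<le> degree q" using cq by (intro le_degree) simp
  ultimately have "lead_coeff q = 1" using cq by simp
  moreover have "poly (map_poly frac_emb q) z = 0"
  proof -
    have "w * PE q z = 0" using wS by (simp add: q_def PE_diff PE_monom algebra_simps)
    then show ?thesis using w by (simp add: PE_def)
  qed
  ultimately show ?thesis using ic unfolding integrally_closed_def by blast
qed



definition toR :: "'a::idom fract \<Rightarrow> 'a" where
  "toR x = (THE r. frac_emb r = x)"

lemma toR: "x \<in> range frac_emb \<Longrightarrow> frac_emb (toR x) = x"
  unfolding toR_def by (rule theI') auto

lemma toR_emb[simp]: "toR (frac_emb r) = r"
  unfolding toR_def by auto

lemma inv_0: "0 \<in> ideal_inverse I"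
  unfolding ideal_inverse_def by (auto intro: range_eqI[of _ _ 0])
lemma inv_1: "1 \<in> ideal_inverse I"
  unfolding ideal_inverse_def by auto
lemma inv_add: "u \<in> ideal_inverse I \<Longrightarrow> v \<in> ideal_inverse I \<Longrightarrow> u + v \<in> ideal_inverse I"
  unfolding ideal_inverse_def
proof (intro CollectI ballI)
  fix i assume "u \<in> {x. \<forall>i\<in>I. x * frac_emb i \<in> range frac_emb}" "v \<in> {x. \<forall>i\<in>I. x * frac_emb i \<in> range frac_emb}" "i \<in> I"
  then have "u * frac_emb i \<in> range frac_emb" "v * frac_emb i \<in> range frac_emb" by auto
  then obtain r s where "u * frac_emb i = frac_emb r" "v * frac_emb i = frac_emb s" by blast
  then have "(u + v) * frac_emb i = frac_emb (r + s)" by (simp add: algebra_simps)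
  then show "(u + v) * frac_emb i \<in> range frac_emb" by (rule ssubst) (rule rangeI)
qed
lemma inv_scal: "u \<in> ideal_inverse I \<Longrightarrow> frac_emb s * u \<in> ideal_inverse I"
  unfolding ideal_inverse_def
proof (intro CollectI ballI)
  fix i assume "u \<in> {x. \<forall>i\<in>I. x * frac_emb i \<in> range frac_emb}" "i \<in> I"
  then have "u * frac_emb i \<in> range frac_emb" by auto
  then obtain r where "u * frac_emb i = frac_emb r" by blast
  then have "frac_emb s * u * frac_emb i = frac_emb (s * r)" by (simp add: algebra_simps)
  then show "frac_emb s * u * frac_emb i \<in> range frac_emb" by (rule ssubst) (rule rangeI)
qed
lemma inv_I: "u \<in> ideal_inverse I \<Longrightarrow> x \<in> I \<Longrightarrow> frac_emb x * u \<in> range frac_emb"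
  unfolding ideal_inverse_def by (auto simp: mult.commute)

definition psum :: "('a::idom \<times> 'a fract) list \<Rightarrow> 'a fract" where
  "psum xs = sum_list (map (\<lambda>(x, u). frac_emb x * u) xs)"

lemma psum_append: "psum (xs @ ys) = psum xs + psum ys" by (simp add: psum_def)
lemma psum_scal: "psum (map (\<lambda>(x, u). (s * x, u)) xs) = frac_emb s * psum xs"
  by (induction xs) (auto simp: psum_def algebra_simps)
lemma psum_single: "psum [(x, u)] = frac_emb x * u" by (simp add: psum_def)

lemma invertible:
  fixes I :: "'a::idom set"
  assumes ded: "dedekind_domain TYPE('a)" and I: "is_ideal I" "I \<noteq> {0}"
  shows "\<exists>xs. set xs \<subseteq> I \<times> ideal_inverse I \<and> psum xs = 1"
proof -
  define J where "J = {r. \<exists>xs. set xs \<subseteq> I \<times> ideal_inverse I \<and> frac_emb r = psum xs}"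
  have Ji: "is_ideal J" unfolding is_ideal_def J_def
  proof (intro conjI ballI allI)
    show "0 \<in> {r. \<exists>xs. set xs \<subseteq> I \<times> ideal_inverse I \<and> frac_emb r = psum xs}"
      by (intro CollectI exI[of _ "[]"]) (simp add: psum_def)
  next
    fix x y assume "x \<in> {r. \<exists>xs. set xs \<subseteq> I \<times> ideal_inverse I \<and> frac_emb r = psum xs}"
      "y \<in> {r. \<exists>xs. set xs \<subseteq> I \<times> ideal_inverse I \<and> frac_emb r = psum xs}"
    then obtain xs ys where "set xs \<subseteq> I \<times> ideal_inverse I" "frac_emb x = psum xs"
      "set ys \<subseteq> I \<times> ideal_inverse I" "frac_emb y = psum ys" by auto
    then show "x + y \<in> {r. \<exists>xs. set xs \<subseteq> I \<times> ideal_inverse I \<and> frac_emb r = psum xs}"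
      by (intro CollectI exI[of _ "xs @ ys"]) (auto simp: psum_append)
  next
    fix s x assume "x \<in> {r. \<exists>xs. set xs \<subseteq> I \<times> ideal_inverse I \<and> frac_emb r = psum xs}"
    then obtain xs where xs: "set xs \<subseteq> I \<times> ideal_inverse I" "frac_emb x = psum xs" by auto
    have "set (map (\<lambda>(x, u). (s * x, u)) xs) \<subseteq> I \<times> ideal_inverse I"
      using xs(1) ideal_multL[OF I(1)] by auto
    then show "s * x \<in> {r. \<exists>xs. set xs \<subseteq> I \<times> ideal_inverse I \<and> frac_emb r = psum xs}"
      using xs(2) by (intro CollectI exI[of _ "map (\<lambda>(x, u). (s * x, u)) xs"]) (simp add: psum_scal)
  qed
  obtain a where a: "a \<in> I" "a \<noteq> 0" using I ideal_0 by blast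
  have "a \<in> J" unfolding J_def using a inv_1 by (intro CollectI exI[of _ "[(a, 1)]"]) (auto simp: psum_single)
  then have J0: "J \<noteq> {0}" using a by auto
  have "J = UNIV"
  proof (rule ccontr)
    assume "J \<noteq> UNIV"
    then obtain z where z: "z \<notin> range frac_emb" "\<forall>j\<in>J. z * frac_emb j \<in> range frac_emb"
      using key_inverse[OF ded Ji J0] by blast
    have zu: "z * u \<in> ideal_inverse I" if u: "u \<in> ideal_inverse I" for u
      unfolding ideal_inverse_def
    proof (intro CollectI ballI)
      fix i assume i: "i \<in> I"
      obtain r where r: "frac_emb r = frac_emb i * u" using inv_I[OF u i] by (metis rangeE)
      have "r \<in> J" unfolding J_def using r i u by (intro CollectI exI[of _ "[(i, u)]"]) (auto simp: psum_single)
      then have "z * frac_emb r \<in> range frac_emb" using z(2) by blast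
      then show "z * u * frac_emb i \<in> range frac_emb" using r by (simp add: algebra_simps)
    qed
    have zk: "z ^ k \<in> ideal_inverse I" for k
      by (induction k) (auto simp: inv_1 zu)
    have "frac_emb a * z ^ k \<in> range frac_emb" for k using inv_I[OF zk a(1)] .
    then have "z \<in> range frac_emb" using integral_crit[OF ded, of "frac_emb a"] a(2) by simp
    then show False using z(1) by blast
  qed
  then have "1 \<in> J" by simp
  then obtain xs where "set xs \<subseteq> I \<times> ideal_inverse I" "frac_emb 1 = psum xs" unfolding J_def by blast
  then show ?thesis by (metis emb_1)
qed



lemma psum_in_Q:
  assumes Q: "is_ideal Q"
  shows "(\<forall>p\<in>set xs. \<exists>r\<in>Q. frac_emb (fst p) * snd p = frac_emb r) \<Longrightarrow> \<exists>r\<in>Q. psum xs = frac_emb r"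
proof (induction xs)
  case Nil
  then show ?case using ideal_0[OF Q] by (auto simp: psum_def)
next
  case (Cons p xs)
  then obtain r1 r2 where "r1 \<in> Q" "frac_emb (fst p) * snd p = frac_emb r1" "r2 \<in> Q" "psum xs = frac_emb r2" by auto
  moreover have "psum (p # xs) = frac_emb (fst p) * snd p + psum xs"
    by (cases p) (simp add: psum_def)
  ultimately have "psum (p # xs) = frac_emb (r1 + r2)" "r1 + r2 \<in> Q" using ideal_add[OF Q] by auto
  then show ?case by blast
qed

lemma prime_prod_notin:
  assumes P: "is_prime_ideal P"
  shows "finite A \<Longrightarrow> (\<forall>x\<in>A. f x \<notin> P) \<Longrightarrow> prod f A \<notin> P"
proof (induction A rule: finite_induct)
  case empty
  then show ?case using P ideal_one unfolding is_prime_ideal_def by auto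
next
  case (insert x F)
  then show ?case using P unfolding is_prime_ideal_def by auto
qed

lemma two_term:
  fixes I :: "'a::idom set"
  assumes ded: "dedekind_domain TYPE('a)" and I: "is_ideal I" and a: "a \<in> I" "a \<noteq> 0"
  shows "\<exists>b\<in>I. \<exists>u1 u2. u1 \<in> ideal_inverse I \<and> u2 \<in> ideal_inverse I \<and>
           frac_emb a * u1 + frac_emb b * u2 = 1"
proof -
  have noeth: "noetherian_ring_cls TYPE('a)" and maxc: "\<And>P::'a set. is_prime_ideal P \<Longrightarrow> P \<noteq> {0} \<Longrightarrow> is_maximal_ideal P"
    using ded by (auto simp: dedekind_domain_def)
  have I0: "I \<noteq> {0}" using a by auto
  obtain xs1 where xs1: "set xs1 \<subseteq> I \<times> ideal_inverse I" "psum xs1 = 1"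
    using invertible[OF ded I I0] by blast
  define J0 where "J0 = {r. \<exists>u\<in>ideal_inverse I. frac_emb r = frac_emb a * u}"
  have J0i: "is_ideal J0" unfolding is_ideal_def J0_def
  proof (intro conjI ballI allI)
    show "0 \<in> {r. \<exists>u\<in>ideal_inverse I. frac_emb r = frac_emb a * u}" using inv_0 by force
  next
    fix x y assume "x \<in> {r. \<exists>u\<in>ideal_inverse I. frac_emb r = frac_emb a * u}"
      "y \<in> {r. \<exists>u\<in>ideal_inverse I. frac_emb r = frac_emb a * u}"
    then obtain u v where "u \<in> ideal_inverse I" "v \<in> ideal_inverse I" "frac_emb x = frac_emb a * u" "frac_emb y = frac_emb a * v" by auto
    then have "u + v \<in> ideal_inverse I" "frac_emb (x + y) = frac_emb a * (u + v)" by (simp add: inv_add, simp add: algebra_simps)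
    then show "x + y \<in> {r. \<exists>u\<in>ideal_inverse I. frac_emb r = frac_emb a * u}" by blast
  next
    fix s x assume "x \<in> {r. \<exists>u\<in>ideal_inverse I. frac_emb r = frac_emb a * u}"
    then obtain u where "u \<in> ideal_inverse I" "frac_emb x = frac_emb a * u" by auto
    then have "frac_emb s * u \<in> ideal_inverse I" "frac_emb (s * x) = frac_emb a * (frac_emb s * u)" by (simp add: inv_scal, simp add: algebra_simps)
    then show "s * x \<in> {r. \<exists>u\<in>ideal_inverse I. frac_emb r = frac_emb a * u}" by blast
  qed
  have "a \<in> J0" unfolding J0_def using inv_1 by force
  then have J00: "J0 \<noteq> {0}" using a by auto
  obtain Ps where Ps: "\<forall>P\<in>set Ps. nzprime P" "prodin J0 Ps"
    using contains_prime_product[OF noeth J0i J00] by blast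
  define S where "S = set Ps"
  have finS: "finite S" by (simp add: S_def)
  have maxS: "is_maximal_ideal Q" if "Q \<in> S" for Q using Ps(1) that maxc by (auto simp: S_def nzprime_def)
  have idS: "is_ideal Q" "Q \<noteq> UNIV" "is_prime_ideal Q" if "Q \<in> S" for Q
    using maxS[OF that] maximal_prime[OF maxS[OF that]] by (auto simp: is_maximal_ideal_def)
  have "\<exists>p. fst p \<in> I \<and> snd p \<in> ideal_inverse I \<and> toR (frac_emb (fst p) * snd p) \<notin> Q" if Q: "Q \<in> S" for Q
  proof (rule ccontr)
    assume "\<not> ?thesis"
    then have all: "toR (frac_emb x * u) \<in> Q" if "x \<in> I" "u \<in> ideal_inverse I" for x u
      using that by force
    have "\<forall>p\<in>set xs1. \<exists>r\<in>Q. frac_emb (fst p) * snd p = frac_emb r"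
    proof
      fix p assume "p \<in> set xs1"
      then have "fst p \<in> I" "snd p \<in> ideal_inverse I" using xs1(1) by auto
      then show "\<exists>r\<in>Q. frac_emb (fst p) * snd p = frac_emb r"
        using all toR[OF inv_I] by metis
    qed
    then obtain r where "r \<in> Q" "psum xs1 = frac_emb r" using psum_in_Q[OF idS(1)[OF Q]] by blast
    then have "1 \<in> Q" using xs1(2) by (metis emb_1 emb_inj)
    then show False using ideal_one idS[OF Q] by blast
  qed
  then obtain pq where pq: "\<And>Q. Q \<in> S \<Longrightarrow> fst (pq Q) \<in> I \<and> snd (pq Q) \<in> ideal_inverse I \<and> toR (frac_emb (fst (pq Q)) * snd (pq Q)) \<notin> Q"
    by metis
  define bq where "bq Q = fst (pq Q)" for Q
  define uq where "uq Q = snd (pq Q)" for Q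
  have bq: "bq Q \<in> I" "uq Q \<in> ideal_inverse I" "toR (frac_emb (bq Q) * uq Q) \<notin> Q" if "Q \<in> S" for Q
    using pq[OF that] by (auto simp: bq_def uq_def)
  have "\<exists>e. e \<notin> Q \<and> (\<forall>Q'\<in>S. Q' \<noteq> Q \<longrightarrow> e \<in> Q')" if Q: "Q \<in> S" for Q
  proof -
    have "\<exists>t. t \<in> Q' \<and> t \<notin> Q" if Q': "Q' \<in> S - {Q}" for Q'
    proof (rule ccontr)
      assume "\<not> ?thesis"
      then have "Q' \<subseteq> Q" by blast
      then show False using maxS[of Q'] Q' idS[OF Q] unfolding is_maximal_ideal_def by blast
    qed
    then obtain t where t: "\<And>Q'. Q' \<in> S - {Q} \<Longrightarrow> t Q' \<in> Q' \<and> t Q' \<notin> Q" by metis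
    define e where "e = prod t (S - {Q})"
    have "e \<notin> Q" unfolding e_def using t finS by (intro prime_prod_notin[OF idS(3)[OF Q]]) auto
    moreover have "e \<in> Q''" if "Q'' \<in> S" "Q'' \<noteq> Q" for Q''
    proof -
      have "e = t Q'' * prod t (S - {Q} - {Q''})" unfolding e_def
        using that finS by (intro prod.remove) auto
      then show ?thesis using t[of Q''] that ideal_multR[OF idS(1)[OF that(1)]] by auto
    qed
    ultimately show ?thesis by blast
  qed
  then obtain e where e: "\<And>Q. Q \<in> S \<Longrightarrow> e Q \<notin> Q" "\<And>Q Q'. Q \<in> S \<Longrightarrow> Q' \<in> S \<Longrightarrow> Q' \<noteq> Q \<Longrightarrow> e Q \<in> Q'"
    by metis
  define b where "b = (\<Sum>Q\<in>S. e Q * bq Q)"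
  have bI: "b \<in> I" unfolding b_def using bq(1) by (intro ideal_sum[OF I] ideal_multL[OF I]) auto
  have claim: "toR (frac_emb b * uq Q) \<notin> Q" if Q: "Q \<in> S" for Q
  proof -
    define s where "s Q' = toR (frac_emb (bq Q') * uq Q)" for Q'
    have s: "frac_emb (s Q') = frac_emb (bq Q') * uq Q" if "Q' \<in> S" for Q'
      unfolding s_def using bq(1)[OF that] bq(2)[OF Q] by (intro toR inv_I)
    have "frac_emb b * uq Q = (\<Sum>Q'\<in>S. frac_emb (e Q') * (frac_emb (bq Q') * uq Q))"
      by (simp add: b_def emb_sum sum_distrib_right mult.assoc)
    also have "\<dots> = (\<Sum>Q'\<in>S. frac_emb (e Q' * s Q'))" using s by (intro sum.cong) auto
    also have "\<dots> = frac_emb (\<Sum>Q'\<in>S. e Q' * s Q')" by (simp add: emb_sum)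
    finally have eq: "toR (frac_emb b * uq Q) = (\<Sum>Q'\<in>S. e Q' * s Q')" by simp
    have split: "(\<Sum>Q'\<in>S. e Q' * s Q') = e Q * s Q + (\<Sum>Q'\<in>S - {Q}. e Q' * s Q')"
      using Q finS by (intro sum.remove)
    have rest: "(\<Sum>Q'\<in>S - {Q}. e Q' * s Q') \<in> Q"
      using e(2)[OF _ Q] by (intro ideal_sum[OF idS(1)[OF Q]] ideal_multR[OF idS(1)[OF Q]]) auto
    have "s Q \<notin> Q" using bq(3)[OF Q] by (simp add: s_def)
    then have first: "e Q * s Q \<notin> Q" using e(1)[OF Q] idS(3)[OF Q] unfolding is_prime_ideal_def by blast
    show ?thesis
    proof
      assume "toR (frac_emb b * uq Q) \<in> Q"
      then have "e Q * s Q + (\<Sum>Q'\<in>S - {Q}. e Q' * s Q') \<in> Q" using eq split by simp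
      then have "(e Q * s Q + (\<Sum>Q'\<in>S - {Q}. e Q' * s Q')) - (\<Sum>Q'\<in>S - {Q}. e Q' * s Q') \<in> Q"
        using rest ideal_diff[OF idS(1)[OF Q]] by blast
      then show False using first by simp
    qed
  qed
  define K0 where "K0 = {r. \<exists>u1 u2. u1 \<in> ideal_inverse I \<and> u2 \<in> ideal_inverse I \<and> frac_emb r = frac_emb a * u1 + frac_emb b * u2}"
  have K0i: "is_ideal K0" unfolding is_ideal_def K0_def
  proof (intro conjI ballI allI)
    show "0 \<in> {r. \<exists>u1 u2. u1 \<in> ideal_inverse I \<and> u2 \<in> ideal_inverse I \<and> frac_emb r = frac_emb a * u1 + frac_emb b * u2}"
      using inv_0 by force
  next
    fix x y assume "x \<in> {r. \<exists>u1 u2. u1 \<in> ideal_inverse I \<and> u2 \<in> ideal_inverse I \<and> frac_emb r = frac_emb a * u1 + frac_emb b * u2}"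
      "y \<in> {r. \<exists>u1 u2. u1 \<in> ideal_inverse I \<and> u2 \<in> ideal_inverse I \<and> frac_emb r = frac_emb a * u1 + frac_emb b * u2}"
    then obtain u1 u2 v1 v2 where "u1 \<in> ideal_inverse I" "u2 \<in> ideal_inverse I" "v1 \<in> ideal_inverse I" "v2 \<in> ideal_inverse I"
      "frac_emb x = frac_emb a * u1 + frac_emb b * u2" "frac_emb y = frac_emb a * v1 + frac_emb b * v2" by blast
    then have "u1 + v1 \<in> ideal_inverse I" "u2 + v2 \<in> ideal_inverse I"
      "frac_emb (x + y) = frac_emb a * (u1 + v1) + frac_emb b * (u2 + v2)" by (simp add: inv_add, simp add: inv_add, simp add: algebra_simps)
    then show "x + y \<in> {r. \<exists>u1 u2. u1 \<in> ideal_inverse I \<and> u2 \<in> ideal_inverse I \<and> frac_emb r = frac_emb a * u1 + frac_emb b * u2}" by blast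
  next
    fix s x assume "x \<in> {r. \<exists>u1 u2. u1 \<in> ideal_inverse I \<and> u2 \<in> ideal_inverse I \<and> frac_emb r = frac_emb a * u1 + frac_emb b * u2}"
    then obtain u1 u2 where "u1 \<in> ideal_inverse I" "u2 \<in> ideal_inverse I"
      "frac_emb x = frac_emb a * u1 + frac_emb b * u2" by blast
    then have "frac_emb s * u1 \<in> ideal_inverse I" "frac_emb s * u2 \<in> ideal_inverse I"
      "frac_emb (s * x) = frac_emb a * (frac_emb s * u1) + frac_emb b * (frac_emb s * u2)" by (simp add: inv_scal, simp add: inv_scal, simp add: algebra_simps)
    then show "s * x \<in> {r. \<exists>u1 u2. u1 \<in> ideal_inverse I \<and> u2 \<in> ideal_inverse I \<and> frac_emb r = frac_emb a * u1 + frac_emb b * u2}" by blast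
  qed
  have J0K0: "J0 \<subseteq> K0"
  proof
    fix r assume "r \<in> J0"
    then obtain u where "u \<in> ideal_inverse I" "frac_emb r = frac_emb a * u" unfolding J0_def by blast
    then have "u \<in> ideal_inverse I" "0 \<in> ideal_inverse I" "frac_emb r = frac_emb a * u + frac_emb b * 0" using inv_0 by auto
    then show "r \<in> K0" unfolding K0_def by blast
  qed
  have "K0 = UNIV"
  proof (rule ccontr)
    assume "K0 \<noteq> UNIV"
    then obtain M where M: "is_maximal_ideal M" "K0 \<subseteq> M" using exists_maximal[OF noeth K0i] by blast
    have "prodin M Ps" using prodin_mono[OF Ps(2)] J0K0 M(2) by blast
    then obtain Q where Q: "Q \<in> S" "Q \<subseteq> M" using prime_prodin[OF maximal_prime[OF M(1)]] by (auto simp: S_def)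
    then have QM: "M = Q" using maxS[OF Q(1)] M(1) unfolding is_maximal_ideal_def by blast
    have "frac_emb (toR (frac_emb b * uq Q)) = frac_emb a * 0 + frac_emb b * uq Q"
      using toR[OF inv_I[OF bq(2)[OF Q(1)] bI]] by simp
    then have "toR (frac_emb b * uq Q) \<in> K0" unfolding K0_def using inv_0 bq(2)[OF Q(1)] by blast
    then show False using M(2) QM claim[OF Q(1)] by blast
  qed
  then have "1 \<in> K0" by simp
  then obtain u1 u2 where "u1 \<in> ideal_inverse I" "u2 \<in> ideal_inverse I" "frac_emb 1 = frac_emb a * u1 + frac_emb b * u2"
    unfolding K0_def by blast
  then show ?thesis using bI by (metis emb_1)
qed



abbreviation embM :: "'a::idom^2^2 \<Rightarrow> 'a fract^2^2" where
  "embM X \<equiv> map_matrix frac_emb X"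

definition toRM :: "'a::idom fract^2^2 \<Rightarrow> 'a^2^2" where
  "toRM Z = (\<chi> i j. toR (Z $ i $ j))"

lemma embM_mult: "embM (X ** Y) = embM X ** embM Y"
  by (simp add: vec_eq_iff matrix_matrix_mult_def emb_sum)
lemma embM_inj: "embM X = embM Y \<Longrightarrow> X = Y"
  by (simp add: vec_eq_iff)
lemma radd: "((A::'b::semiring_1^2^2) + B) ** C = A ** C + B ** C"
  by (simp add: vec_eq_iff matrix_matrix_mult_def sum.distrib distrib_right)
lemma embM_toRM: "(\<And>i j. Z $ i $ j \<in> range frac_emb) \<Longrightarrow> embM (toRM Z) = Z"
  by (simp add: vec_eq_iff toRM_def toR)
lemma toRM_embM[simp]: "toRM (embM X) = X"
  by (simp add: vec_eq_iff toRM_def)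
lemma toR_add: "x \<in> range frac_emb \<Longrightarrow> y \<in> range frac_emb \<Longrightarrow> toR (x + y) = toR x + toR y"
  by (auto simp flip: emb_add)
lemma toRM_add: "(\<And>i j. A $ i $ j \<in> range frac_emb) \<Longrightarrow> (\<And>i j. B $ i $ j \<in> range frac_emb) \<Longrightarrow>
   toRM (A + B) = toRM A + toRM B"
  by (simp add: vec_eq_iff toRM_def toR_add)
lemma range_sum: "(\<And>k. k \<in> A \<Longrightarrow> g k \<in> range frac_emb) \<Longrightarrow> sum g A \<in> range frac_emb"
proof -
  assume "\<And>k. k \<in> A \<Longrightarrow> g k \<in> range frac_emb"
  then have "sum g A = frac_emb (\<Sum>k\<in>A. toR (g k))" by (simp add: emb_sum toR)
  then show ?thesis by simp
qed

definition EE :: "2 \<Rightarrow> 2 \<Rightarrow> 'a::comm_ring_1^2^2" where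
  "EE p q = (\<chi> i j. if i = p \<and> j = q then 1 else 0)"

definition Fm :: "('a::comm_ring_1^2^2 \<Rightarrow> 'a) \<Rightarrow> 'a^2^2" where
  "Fm f = (\<chi> i j. f (EE j i))"

definition fF :: "'a::comm_ring_1^2^2 \<Rightarrow> ('a^2^2 \<Rightarrow> 'a)" where
  "fF F = (\<lambda>x. \<Sum>i\<in>UNIV. \<Sum>j\<in>UNIV. x $ i $ j * F $ j $ i)"

lemma hom_zero: "f \<in> hom_R_A I \<Longrightarrow> f 0 = 0"
proof -
  assume "f \<in> hom_R_A I"
  then have "f (0 + 0) = f 0 + f 0" unfolding hom_R_A_def by blast
  then show ?thesis by simp
qed

lemma hom_sum: assumes f: "f \<in> hom_R_A I" shows "f (sum g A) = (\<Sum>a\<in>A. f (g a))"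
proof -
  have z: "f 0 = 0" by (rule hom_zero[OF f])
  have a: "f (x + y) = f x + f y" for x y using f by (simp add: hom_R_A_def)
  show ?thesis by (induction A rule: infinite_finite_induct) (auto simp: z a)
qed

lemma decomp: "x = (\<Sum>i\<in>UNIV. \<Sum>j\<in>UNIV. mscale (x $ i $ j) (EE i j :: 'a::comm_ring_1^2^2))"
  by (simp add: vec_eq_iff forall_2 sum_2 mscale_def EE_def)

lemma hom_expand: "f \<in> hom_R_A I \<Longrightarrow> f x = (\<Sum>i\<in>UNIV. \<Sum>j\<in>UNIV. x $ i $ j * f (EE i j))"
proof -
  assume f: "f \<in> hom_R_A I"
  have "f x = f (\<Sum>i\<in>UNIV. \<Sum>j\<in>UNIV. mscale (x $ i $ j) (EE i j))" by (subst decomp) simp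
  also have "\<dots> = (\<Sum>i\<in>UNIV. \<Sum>j\<in>UNIV. x $ i $ j * f (EE i j))"
    using f by (simp add: hom_sum[OF f] hom_R_A_def)
  finally show ?thesis .
qed

lemma Fm_I: "f \<in> hom_R_A I \<Longrightarrow> Fm f $ i $ j \<in> I"
  by (simp add: Fm_def hom_R_A_def)

lemma Fm_nth: "Fm f $ i $ j = f (EE j i)"
  by (simp add: Fm_def)

lemma hom_expand': "f \<in> hom_R_A I \<Longrightarrow> f x = (\<Sum>i\<in>UNIV. \<Sum>j\<in>UNIV. x $ i $ j * Fm f $ j $ i)"
  unfolding Fm_nth by (rule hom_expand)

lemma Fm_act: assumes f: "f \<in> hom_R_A I" shows "Fm (hom_act a f) = a ** Fm f"
proof -
  have "Fm (hom_act a f) $ i $ j = (a ** Fm f) $ i $ j" for i j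
  proof -
    have "Fm (hom_act a f) $ i $ j = f (EE j i ** a)" by (simp add: Fm_nth hom_act_def)
    also have "\<dots> = (\<Sum>p\<in>UNIV. \<Sum>q\<in>UNIV. (EE j i ** a) $ p $ q * Fm f $ q $ p)" by (rule hom_expand'[OF f])
    also have "\<dots> = (a ** Fm f) $ i $ j"
      using exhaust_2[of i] exhaust_2[of j]
      by (auto simp: matrix_matrix_mult_def EE_def sum_2)
    finally show ?thesis .
  qed
  then show ?thesis by (simp add: vec_eq_iff)
qed

lemma Fm_add: "Fm (\<lambda>x. f x + g x) = Fm f + Fm g"
  by (simp add: vec_eq_iff Fm_def)

lemma fF_hom: "(\<And>i j. F $ i $ j \<in> I) \<Longrightarrow> is_ideal I \<Longrightarrow> fF F \<in> hom_R_A I"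
  unfolding hom_R_A_def fF_def
  by (auto simp: sum.distrib distrib_right sum_distrib_left mscale_def mult.assoc
           intro!: ideal_sum ideal_multL)

lemma Fm_fF: "Fm (fF F) = F"
  by (simp add: vec_eq_iff forall_2 Fm_def fF_def EE_def sum_2)

lemma hom_eq: "f \<in> hom_R_A I \<Longrightarrow> g \<in> hom_R_A I \<Longrightarrow> Fm f = Fm g \<Longrightarrow> f = g"
proof
  fix x assume f: "f \<in> hom_R_A I" and g: "g \<in> hom_R_A I" and e: "Fm f = Fm g"
  have "f x = (\<Sum>i\<in>UNIV. \<Sum>j\<in>UNIV. x $ i $ j * Fm f $ j $ i)" by (rule hom_expand'[OF f])
  also have "\<dots> = g x" using hom_expand'[OF g, of x] e by simp
  finally show "f x = g x" .
qed



theorem proposition2p2: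
  fixes I :: "'a::idom set"
  assumes "dedekind_domain TYPE('a)"
    and "is_ideal I"
    and "\<not> principal_ideal I"
    and "ideal_iso_frac I (ideal_inverse I)"
  shows "hom_iso_regular I"
proof -
  note ded = assms(1) and Ii = assms(2)
  have "I \<noteq> {0}"
  proof
    assume "I = {0}"
    then have "I = {0 * r | r. True}" by simp
    then show False using assms(3) unfolding principal_ideal_def by blast
  qed
  then obtain a where a: "a \<in> I" "a \<noteq> 0" using ideal_0[OF Ii] by blast
  obtain b u1 u2 where b: "b \<in> I" "u1 \<in> ideal_inverse I" "u2 \<in> ideal_inverse I"
    and R1: "frac_emb a * u1 + frac_emb b * u2 = 1"
    using two_term[OF ded Ii a] by blast
  obtain \<phi> where phi: "bij_betw \<phi> I (ideal_inverse I)" "\<And>r x. x \<in> I \<Longrightarrow> \<phi> (r * x) = frac_emb r * \<phi> x"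
    using assms(4) unfolding ideal_iso_frac_def by blast
  have phiI: "\<phi> x \<in> ideal_inverse I" if "x \<in> I" for x
    using phi(1) that bij_betwE by blast
  have sym: "frac_emb x * \<phi> y = frac_emb y * \<phi> x" if "x \<in> I" "y \<in> I" for x y
  proof -
    have "frac_emb x * \<phi> y = \<phi> (x * y)" using phi(2)[OF that(2)] by simp
    also have "\<dots> = \<phi> (y * x)" by (simp add: mult.commute)
    also have "\<dots> = frac_emb y * \<phi> x" using phi(2)[OF that(1)] by simp
    finally show ?thesis .
  qed
  have surjphi: "\<phi> ` I = ideal_inverse I" using phi(1) by (simp add: bij_betw_def)
  define y1 where "y1 = inv_into I \<phi> u1"
  define y2 where "y2 = inv_into I \<phi> u2"
  have y: "y1 \<in> I" "y2 \<in> I" "\<phi> y1 = u1" "\<phi> y2 = u2"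
    unfolding y1_def y2_def using b surjphi by (auto intro: inv_into_into f_inv_into_f)
  have s1: "frac_emb a * \<phi> b = frac_emb b * \<phi> a" using sym a(1) b(1) by blast
  have s2: "frac_emb y2 * u1 = frac_emb y1 * u2" using sym[OF y(2) y(1)] y by simp
  have s3: "frac_emb y2 * \<phi> b = frac_emb b * u2" using sym[OF y(2) b(1)] y by simp
  have s4: "frac_emb y1 * \<phi> a = frac_emb a * u1" using sym[OF y(1) a(1)] y by simp
  have s5: "frac_emb b * u1 = frac_emb y1 * \<phi> b" using sym[OF b(1) y(1)] y by simp
  have s6: "frac_emb a * u2 = frac_emb y2 * \<phi> a" using sym[OF a(1) y(2)] y by simp
  define G :: "'a^2^2" where "G = (\<chi> i j. if i = 1 then (if j = 1 then a else b) else (if j = 1 then - y2 else y1))"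
  define H :: "'a fract^2^2" where "H = (\<chi> i j. if i = 1 then (if j = 1 then u1 else - \<phi> b) else (if j = 1 then u2 else \<phi> a))"
  have GI: "G $ i $ j \<in> I" for i j
    unfolding G_def using a(1) b(1) y(1,2) ideal_neg[OF Ii] by auto
  have negI: "- \<phi> b \<in> ideal_inverse I"
    using inv_scal[OF phiI[OF b(1)], of "-1"] by simp
  have HI: "H $ i $ j \<in> ideal_inverse I" for i j
    unfolding H_def using b(2,3) phiI[OF a(1)] negI by auto
  have GH: "embM G ** H = mat 1"
  proof -
    have e12: "frac_emb a * - \<phi> b + frac_emb b * \<phi> a = 0" using s1 by simp
    have e21: "- frac_emb y2 * u1 + frac_emb y1 * u2 = 0" using s2 by simp
    have e22: "- frac_emb y2 * - \<phi> b + frac_emb y1 * \<phi> a = 1" using s3 s4 R1 by (simp add: add.commute)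
    show ?thesis
      by (simp add: vec_eq_iff forall_2 matrix_matrix_mult_def sum_2 mat_def G_def H_def R1 s1 s2 s3 s4)
  qed
  have HG: "H ** embM G = mat 1"
  proof -
    have e11: "u1 * frac_emb a + \<phi> b * frac_emb y2 = 1"
      using s3 R1 by (metis mult.commute)
    have e12: "u1 * frac_emb b = \<phi> b * frac_emb y1" using s5 by (metis mult.commute)
    have e21: "u2 * frac_emb a = \<phi> a * frac_emb y2" using s6 by (metis mult.commute)
    have e22: "u2 * frac_emb b + \<phi> a * frac_emb y1 = 1"
      using s4 R1 by (metis mult.commute add.commute)
    show ?thesis
      by (simp add: vec_eq_iff forall_2 matrix_matrix_mult_def sum_2 mat_def G_def H_def e11 e12 e21 e22)
  qed
  have rng: "(embM X ** H) $ i $ j \<in> range frac_emb" if "\<And>i j. X $ i $ j \<in> I" for X i j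
    unfolding matrix_matrix_mult_def using inv_I[OF HI that] by (auto intro!: range_sum)
  define \<Phi> where "\<Phi> f = toRM (embM (Fm f) ** H)" for f
  have embPhi: "embM (\<Phi> f) = embM (Fm f) ** H" if "f \<in> hom_R_A I" for f
    unfolding \<Phi>_def using rng[OF Fm_I[OF that]] by (intro embM_toRM) 
  have inj: "inj_on \<Phi> (hom_R_A I)"
  proof (rule inj_onI)
    fix f g assume f: "f \<in> hom_R_A I" and g: "g \<in> hom_R_A I" and e: "\<Phi> f = \<Phi> g"
    then have "embM (Fm f) ** H = embM (Fm g) ** H" using embPhi by metis
    then have "(embM (Fm f) ** H) ** embM G = (embM (Fm g) ** H) ** embM G" by simp
    then have "embM (Fm f) = embM (Fm g)" by (simp add: matrix_mul_assoc[symmetric] HG)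
    then have "Fm f = Fm g" by (rule embM_inj)
    then show "f = g" by (rule hom_eq[OF f g])
  qed
  have surj: "\<Phi> ` hom_R_A I = UNIV"
  proof (intro set_eqI iffI)
    fix X :: "'a^2^2"
    define F where "F = X ** G"
    have FI: "F $ i $ j \<in> I" for i j
      unfolding F_def matrix_matrix_mult_def using GI by (auto intro!: ideal_sum[OF Ii] ideal_multL[OF Ii])
    have f: "fF F \<in> hom_R_A I" by (rule fF_hom[OF FI Ii])
    have "\<Phi> (fF F) = toRM (embM (X ** G) ** H)" by (simp add: \<Phi>_def Fm_fF F_def)
    also have "\<dots> = X" by (simp add: embM_mult matrix_mul_assoc[symmetric] GH)
    finally show "X \<in> \<Phi> ` hom_R_A I" using f by (metis image_eqI)
  qed auto
  have add: "\<Phi> (\<lambda>x. f x + g x) = \<Phi> f + \<Phi> g" if f: "f \<in> hom_R_A I" and g: "g \<in> hom_R_A I" for f g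
  proof -
    have "\<Phi> (\<lambda>x. f x + g x) = toRM (embM (Fm f) ** H + embM (Fm g) ** H)"
      proof -
        have "embM (Fm f + Fm g) = embM (Fm f) + embM (Fm g)" by (simp add: vec_eq_iff)
        then show ?thesis by (simp add: \<Phi>_def Fm_add radd)
      qed
    also have "\<dots> = \<Phi> f + \<Phi> g" unfolding \<Phi>_def
      by (rule toRM_add) (use rng[OF Fm_I[OF f]] rng[OF Fm_I[OF g]] in auto)
    finally show ?thesis .
  qed
  have act: "\<Phi> (hom_act c f) = c ** \<Phi> f" if f: "f \<in> hom_R_A I" for c f
  proof -
    have "\<Phi> (hom_act c f) = toRM (embM c ** (embM (Fm f) ** H))"
      by (simp add: \<Phi>_def Fm_act[OF f] embM_mult matrix_mul_assoc)
    also have "\<dots> = toRM (embM c ** embM (\<Phi> f))" by (simp add: embPhi[OF f])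
    also have "\<dots> = c ** \<Phi> f" by (simp add: embM_mult[symmetric])
    finally show ?thesis .
  qed
  show ?thesis unfolding hom_iso_regular_def
    using inj surj add act by (intro exI[of _ \<Phi>]) (auto simp: bij_betw_def)
qed


end
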